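(* Let $G$ be a finite abelian group, let $t\ge2$, and let $H_1,\dots,H_t$ be distinct subgroups of $G$ and $D$ a subgroup with $H_i\cap H_j=D$ for all $i\neq j$ and $|H_i:D|>2$ for all $1\le i\le t$. Let $H=H_1+\dots+H_t$. Let $\mathcal{A}$ consist of the following subsets of $G$: (1) $A_i=H_i\setminus D$ for $1\le i\le t$; (2) all cosets of $D$ that are contained in $H$ but not contained in $H_1\cup\dots\cup H_t$; (3) for some chosen set (possibly empty) of cosets of $H$ different from $H$ itself, all the cosets of $D$ lying within those cosets of $H$. Then $\mathcal{A}$ is a bimodal collection of pairwise disjoint subsets of $G$; moreover, the members $S$ of $\mathcal{A}$ with $|S|$ smaller than the order of the internal difference group of $S$ are exactly $A_1,\dots,A_t$, the internal difference group of $A_i$ is $H_i$, and $(H_i)\setminus A_i=D$ is a subgroup (so $\mathcal{A}$ is in canonical position).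
   Context: $G$ is written additively. The internal difference group of a subset $S\subseteq G$ is the subgroup generated by all $x-y$ with $x,y\in S$. A collection $\{A_1,\dots,A_m\}$ of pairwise disjoint subsets of $G$ is bimodal if for every $i$ and every $\delta\in G\setminus\{0\}$, the number $N_i(\delta)$ of pairs $(a,b)$ with $a\in A_i$, $b\in A_j$ for some $j\neq i$, and $a-b=\delta$, satisfies $N_i(\delta)\in\{0,|A_i|\}$. *)

theory Defs
  imports Main "HOL-Computational_Algebra.Group_Closure" "HOL-Library.Disjoint_Sets"
begin

text \<open>A subgroup of an additive abelian group (the ambient group G is the whole type).\<close>
definition is_subgroup :: "'a::ab_group_add set \<Rightarrow> bool" where
  "is_subgroup H \<longleftrightarrow> 0 \<in> H \<and> (\<forall>x\<in>H. \<forall>y\<in>H. x - y \<in> H)"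

definition int_diff_group :: "'a::ab_group_add set \<Rightarrow> 'a set" where
  "int_diff_group S = group_closure {x - y | x y. x \<in> S \<and> y \<in> S}"

definition coset :: "'a::ab_group_add \<Rightarrow> 'a set \<Rightarrow> 'a set" where
  "coset g K = (\<lambda>x. g + x) ` K"

definition sumset_fam :: "nat \<Rightarrow> (nat \<Rightarrow> 'a::ab_group_add set) \<Rightarrow> 'a set" where
  "sumset_fam t H = {\<Sum>i\<in>{1..t}. f i | f. \<forall>i\<in>{1..t}. f i \<in> H i}"

definition N_count :: "'a::ab_group_add set set \<Rightarrow> 'a set \<Rightarrow> 'a \<Rightarrow> nat" where
  "N_count \<A> A \<delta> = card {(a, b). a \<in> A \<and> b \<in> \<Union>(\<A> - {A}) \<and> a - b = \<delta>}"

definition bimodal :: "'a::ab_group_add set set \<Rightarrow> bool" where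
  "bimodal \<A> \<longleftrightarrow> disjoint \<A> \<and>
     (\<forall>A\<in>\<A>. \<forall>\<delta>. \<delta> \<noteq> 0 \<longrightarrow> N_count \<A> A \<delta> \<in> {0, card A})"

end

theory Submission
  imports Defs
begin

lemma sg0: "is_subgroup H \<Longrightarrow> 0 \<in> H" by (simp add: is_subgroup_def)
lemma sgdiff: "is_subgroup H \<Longrightarrow> x \<in> H \<Longrightarrow> y \<in> H \<Longrightarrow> x - y \<in> H" by (simp add: is_subgroup_def)
lemma sgneg: "is_subgroup H \<Longrightarrow> x \<in> H \<Longrightarrow> - x \<in> H"
  using sgdiff[of H 0 x] sg0[of H] by simp
lemma sgadd: "is_subgroup H \<Longrightarrow> x \<in> H \<Longrightarrow> y \<in> H \<Longrightarrow> x + y \<in> H"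
  using sgdiff[of H x "-y"] sgneg[of H y] by simp

lemma mem_coset: "x \<in> coset g K \<longleftrightarrow> x - g \<in> K"
  unfolding coset_def image_iff
  by (metis add_diff_cancel_left' diff_add_cancel add.commute)

lemma coset_eq: assumes "is_subgroup D" "y \<in> coset g D" shows "coset g D = coset y D"
proof -
  have "y - g \<in> D" using assms mem_coset by blast
  show ?thesis
  proof (auto simp: mem_coset)
    fix x assume "x - g \<in> D"
    then have "(x - g) - (y - g) \<in> D" using sgdiff assms `y - g \<in> D` by blast
    then show "x - y \<in> D" by simp
  next
    fix x assume "x - y \<in> D"
    then have "(x - y) + (y - g) \<in> D" using sgadd assms `y - g \<in> D` by blast
    then show "x - g \<in> D" by simp
  qed
qed

lemma coset_disj: assumes "is_subgroup D" "coset g D \<noteq> coset h D"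
  shows "coset g D \<inter> coset h D = {}"
  using coset_eq[OF assms(1)] assms(2) by blast

lemma coset_self: "is_subgroup D \<Longrightarrow> g \<in> coset g D"
  using mem_coset sg0 by fastforce

lemma coset_sub: assumes "is_subgroup K" "D \<subseteq> K" "x \<in> coset g D" "g \<in> K" shows "x \<in> K"
proof -
  have "x - g \<in> K" using assms mem_coset by blast
  then have "(x - g) + g \<in> K" using sgadd assms by blast
  then show ?thesis by simp
qed

lemma card_coset: "card (coset g D) = card D"
  unfolding coset_def by (rule card_image) (simp add: inj_on_def)

lemma gc_sub: assumes "is_subgroup K" "S \<subseteq> K" shows "group_closure S \<subseteq> K"
proof
  fix x assume "x \<in> group_closure S" then show "x \<in> K"
    by induct (use assms sg0 sgdiff in auto)
qed

lemma gc_eq: assumes "is_subgroup K" "S = K" shows "group_closure S = K"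
  using gc_sub[OF assms(1)] assms(2) group_closure.base by blast

lemma idg_coset: assumes "is_subgroup D" shows "int_diff_group (coset g D) = D"
proof -
  have "{x - y | x y. x \<in> coset g D \<and> y \<in> coset g D} = D"
  proof (auto simp: mem_coset)
    fix x y assume "x - g \<in> D" "y - g \<in> D"
    then have "(x - g) - (y - g) \<in> D" using sgdiff assms by blast
    then show "x - y \<in> D" by simp
  next
    fix d assume "d \<in> D"
    then show "\<exists>x y. d = x - y \<and> x - g \<in> D \<and> y - g \<in> D"
      by (intro exI[of _ "g + d"] exI[of _ g]) (simp add: sg0 assms)
  qed
  then show ?thesis unfolding int_diff_group_def using gc_eq assms by blast
qed

lemma N_count_lemma:
  assumes fin: "finite A"
    and dich: "(\<forall>a\<in>A. a - \<delta> \<in> \<Union>(\<A> - {A})) \<or> (\<forall>a\<in>A. a - \<delta> \<notin> \<Union>(\<A> - {A}))"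
  shows "N_count \<A> A \<delta> \<in> {0, card A}"
proof -
  let ?P = "{(a, b). a \<in> A \<and> b \<in> \<Union>(\<A> - {A}) \<and> a - b = \<delta>}"
  from dich show ?thesis
  proof
    assume h: "\<forall>a\<in>A. a - \<delta> \<in> \<Union>(\<A> - {A})"
    have "?P = (\<lambda>a. (a, a - \<delta>)) ` A"
      using h by (auto simp: image_iff) 
    moreover have "card ((\<lambda>a. (a, a - \<delta>)) ` A) = card A"
      by (rule card_image) (simp add: inj_on_def)
    ultimately show ?thesis unfolding N_count_def by simp
  next
    assume h: "\<forall>a\<in>A. a - \<delta> \<notin> \<Union>(\<A> - {A})"
    have "?P = {}"
    proof (rule ccontr)
      assume "?P \<noteq> {}" then obtain a b where "a \<in> A" "b \<in> \<Union>(\<A> - {A})" "a - b = \<delta>" by blast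
      then have "b = a - \<delta>" by (simp add: algebra_simps)
      then show False using h `a \<in> A` `b \<in> \<Union>(\<A> - {A})` by blast
    qed
    then have "N_count \<A> A \<delta> = 0" unfolding N_count_def by (metis card.empty)
    then show ?thesis by simp
  qed
qed

theorem theorem3p11:
  fixes H :: "nat \<Rightarrow> ('a::{ab_group_add, finite}) set"
    and D :: "'a set" and t :: nat and Cs :: "'a set set"
  assumes t2: "t \<ge> 2"
    and subH: "\<forall>i\<in>{1..t}. is_subgroup (H i)"
    and distinct: "inj_on H {1..t}"
    and subD: "is_subgroup D"
    and inter: "\<forall>i\<in>{1..t}. \<forall>j\<in>{1..t}. i \<noteq> j \<longrightarrow> H i \<inter> H j = D"
    and index: "\<forall>i\<in>{1..t}. card (H i) div card D > 2"
    and Cs: "\<forall>K\<in>Cs. (\<exists>g. K = coset g (sumset_fam t H)) \<and> K \<noteq> sumset_fam t H"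
  shows "let Hs = sumset_fam t H;
             A = (\<lambda>i. H i - D);
             \<A> = A ` {1..t}
                 \<union> {coset g D | g. coset g D \<subseteq> Hs \<and> \<not> coset g D \<subseteq> (\<Union>i\<in>{1..t}. H i)}
                 \<union> {coset g D | g. \<exists>K\<in>Cs. coset g D \<subseteq> K}
         in bimodal \<A>
            \<and> {S \<in> \<A>. card S < card (int_diff_group S)} = A ` {1..t}
            \<and> (\<forall>i\<in>{1..t}. int_diff_group (A i) = H i \<and> H i - A i = D \<and> is_subgroup (H i - A i))"
proof -
  define Hs where "Hs = sumset_fam t H"
  define A where "A = (\<lambda>i. H i - D)"
  define T2 where "T2 = {coset g D | g. coset g D \<subseteq> Hs \<and> \<not> coset g D \<subseteq> (\<Union>i\<in>{1..t}. H i)}"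
  define T3 where "T3 = {coset g D | g. \<exists>K\<in>Cs. coset g D \<subseteq> K}"
  define \<A> where "\<A> = A ` {1..t} \<union> T2 \<union> T3"
  have one: "1 \<in> {1..t}" using t2 by simp
  have DH: "D \<subseteq> H i" if i: "i \<in> {1..t}" for i
  proof -
    obtain j where "j \<in> {1..t}" "j \<noteq> i"
    proof (cases "i = 1")
      case True then show ?thesis using that[of 2] t2 by simp
    next
      case False then show ?thesis using that[of 1] i by simp
    qed
    then show "D \<subseteq> H i" using inter i by blast
  qed
  have Hs_mem: "x \<in> Hs \<longleftrightarrow> (\<exists>f. x = (\<Sum>i\<in>{1..t}. f i) \<and> (\<forall>i\<in>{1..t}. f i \<in> H i))" for x
    unfolding Hs_def sumset_fam_def by blast
  have sgHs: "is_subgroup Hs"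
    unfolding is_subgroup_def
  proof safe
    show "0 \<in> Hs" unfolding Hs_mem by (intro exI[of _ "\<lambda>_. 0"]) (simp add: sg0 subH)
  next
    fix x y assume "x \<in> Hs" "y \<in> Hs"
    then obtain f g where f: "x = (\<Sum>i\<in>{1..t}. f i)" "\<forall>i\<in>{1..t}. f i \<in> H i"
      and g: "y = (\<Sum>i\<in>{1..t}. g i)" "\<forall>i\<in>{1..t}. g i \<in> H i" unfolding Hs_mem by blast
    show "x - y \<in> Hs" unfolding Hs_mem
      by (intro exI[of _ "\<lambda>i. f i - g i"]) (simp add: f g sum_subtractf sgdiff subH)
  qed
  have HHs: "H i \<subseteq> Hs" if i: "i \<in> {1..t}" for i
  proof
    fix x assume x: "x \<in> H i"
    show "x \<in> Hs" unfolding Hs_mem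
      by (intro exI[of _ "\<lambda>j. if j = i then x else 0"]) (use i x in \<open>auto simp: sg0 subH\<close>)
  qed
  have DHs: "D \<subseteq> Hs" using DH[OF one] HHs[OF one] by blast
  have CsP: "K \<inter> Hs = {} \<and> (\<forall>x\<in>K. \<forall>h\<in>Hs. x + h \<in> K)" if K: "K \<in> Cs" for K
  proof -
    obtain c where c: "K = coset c Hs" "K \<noteq> Hs" using Cs K unfolding Hs_def by blast
    have sat: "\<forall>x\<in>K. \<forall>h\<in>Hs. x + h \<in> K"
    proof (intro ballI)
      fix x h assume xK: "x \<in> K" and h: "h \<in> Hs"
      have "x - c \<in> Hs" using xK c(1) mem_coset[of x c Hs] by simp
      then have "(x - c) + h \<in> Hs" using sgadd[OF sgHs _ h] by simp
      then have "(x + h) - c \<in> Hs" by (simp add: algebra_simps)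
      then show "x + h \<in> K" using c(1) mem_coset[of "x + h" c Hs] by simp
    qed
    have "K \<inter> Hs = {}"
    proof (rule ccontr)
      assume "K \<inter> Hs \<noteq> {}"
      then obtain x where x: "x \<in> K" "x \<in> Hs" by blast
      then have "x - c \<in> Hs" using c(1) mem_coset[of x c Hs] by simp
      then have cH: "c \<in> Hs" using x sgdiff[OF sgHs, of x "x - c"] by simp
      have zz: "z - c \<in> Hs \<longleftrightarrow> z \<in> Hs" for z
      proof
        assume "z - c \<in> Hs" then show "z \<in> Hs" using sgadd[OF sgHs, of "z - c" c] cH by simp
      next
        assume "z \<in> Hs" then show "z - c \<in> Hs" using sgdiff[OF sgHs, of z c] cH by simp
      qed
      have "K = Hs"
      proof (rule set_eqI)
        fix z show "z \<in> K \<longleftrightarrow> z \<in> Hs" using c(1) mem_coset[of z c Hs] zz[of z] by simp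
      qed
      then show False using c(2) by simp
    qed
    then show ?thesis using sat by blast
  qed
  have cosetH: "coset g D \<subseteq> H i" if iH: "i \<in> {1..t}" "coset g D \<inter> H i \<noteq> {}" for i g
  proof -
    obtain y where y: "y \<in> coset g D" "y \<in> H i" using iH(2) by blast
    have "coset g D = coset y D" using coset_eq[OF subD y(1)] .
    show ?thesis
    proof
      fix z assume "z \<in> coset g D"
      then have "z \<in> coset y D" using \<open>coset g D = coset y D\<close> by simp
      then show "z \<in> H i" using coset_sub[of "H i" D z y] subH iH(1) DH[OF iH(1)] y(2) by blast
    qed
  qed
  have T2disj: "X \<inter> H i = {}" if "X \<in> T2" "i \<in> {1..t}" for X i
    using that cosetH unfolding T2_def by blast
  have T2sub: "X \<subseteq> Hs" if "X \<in> T2" for X using that unfolding T2_def by blast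
  have T3sub: "X \<subseteq> \<Union>Cs" if "X \<in> T3" for X using that unfolding T3_def by blast
  have T3disj: "X \<inter> Hs = {}" if "X \<in> T3" for X using T3sub[OF that] CsP by blast
  have Asub: "A i \<subseteq> Hs - D" if "i \<in> {1..t}" for i using HHs[OF that] unfolding A_def by blast
  have Tcos: "\<exists>g. X = coset g D" if "X \<in> T2 \<union> T3" for X using that unfolding T2_def T3_def by blast
  have Amem: "A i \<in> \<A>" if "i \<in> {1..t}" for i using that unfolding \<A>_def by blast
  have cases\<A>: "(\<exists>i\<in>{1..t}. X = A i) \<or> X \<in> T2 \<or> X \<in> T3" if "X \<in> \<A>" for X
    using that unfolding \<A>_def by blast
  have U: "\<Union>\<A> = (Hs - D) \<union> \<Union>Cs"
  proof
    show "\<Union>\<A> \<subseteq> (Hs - D) \<union> \<Union>Cs"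
    proof
      fix x assume "x \<in> \<Union>\<A>"
      then obtain X where X: "X \<in> \<A>" "x \<in> X" by blast
      from cases\<A>[OF X(1)] show "x \<in> (Hs - D) \<union> \<Union>Cs"
      proof (elim disjE)
        assume "\<exists>i\<in>{1..t}. X = A i" then show ?thesis using Asub X by blast
      next
        assume "X \<in> T2" then show ?thesis using T2sub T2disj[OF _ one] DH[OF one] X by blast
      next
        assume "X \<in> T3" then show ?thesis using T3sub X by blast
      qed
    qed
  next
    show "(Hs - D) \<union> \<Union>Cs \<subseteq> \<Union>\<A>"
    proof
      fix x assume x: "x \<in> (Hs - D) \<union> \<Union>Cs"
      show "x \<in> \<Union>\<A>"
      proof (cases "x \<in> \<Union>Cs")
        case True
        then obtain K where K: "K \<in> Cs" "x \<in> K" by blast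
        have "coset x D \<subseteq> K"
        proof
          fix y assume "y \<in> coset x D"
          then have "y - x \<in> Hs" using mem_coset[of y x D] DHs by blast
          then have "x + (y - x) \<in> K" using CsP[OF K(1)] K(2) by blast
          then show "y \<in> K" by simp
        qed
        then have "coset x D \<in> T3" unfolding T3_def using K by blast
        then show ?thesis using coset_self[OF subD] unfolding \<A>_def by blast
      next
        case False
        then have xH: "x \<in> Hs" "x \<notin> D" using x by auto
        show ?thesis
        proof (cases "\<exists>i\<in>{1..t}. x \<in> H i")
          case True
          then obtain i where "i \<in> {1..t}" "x \<in> H i" by blast
          then have "x \<in> A i" using xH unfolding A_def by blast
          then show ?thesis using Amem `i \<in> {1..t}` by blast
        next
          case False
          have "coset x D \<subseteq> Hs" using coset_sub[OF sgHs DHs _ xH(1)] by blast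
          moreover have "\<not> coset x D \<subseteq> (\<Union>i\<in>{1..t}. H i)" using False coset_self[OF subD, of x] by blast
          ultimately have "coset x D \<in> T2" unfolding T2_def by blast
          then show ?thesis using coset_self[OF subD] unfolding \<A>_def by blast
        qed
      qed
    qed
  qed
  have AT: "A i \<inter> Y = {}" if "i \<in> {1..t}" "Y \<in> T2 \<union> T3" for i Y
    using that T2disj T3disj Asub unfolding A_def by blast
  have disj: "disjoint \<A>"
    unfolding disjoint_def pairwise_def disjnt_def
  proof (intro ballI impI)
    fix X Y assume X: "X \<in> \<A>" and Y: "Y \<in> \<A>" and ne: "X \<noteq> Y"
    show "X \<inter> Y = {}"
    proof (cases "X \<in> T2 \<union> T3")
      case XT: True
      show ?thesis
      proof (cases "Y \<in> T2 \<union> T3")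
        case True
        then show ?thesis using Tcos XT ne coset_disj[OF subD] by metis
      next
        case False
        then obtain j where "j \<in> {1..t}" "Y = A j" using cases\<A>[OF Y] by blast
        then show ?thesis using AT XT by blast
      qed
    next
      case False
      then obtain i where i: "i \<in> {1..t}" "X = A i" using cases\<A>[OF X] by blast
      show ?thesis
      proof (cases "Y \<in> T2 \<union> T3")
        case True
        then show ?thesis using AT i by blast
      next
        case False
        then obtain j where j: "j \<in> {1..t}" "Y = A j" using cases\<A>[OF Y] by blast
        then have "i \<noteq> j" using i ne by blast
        then show ?thesis using inter i j unfolding A_def by blast
      qed
    qed
  qed
  have sat: "x + d \<in> X" if "X \<in> \<A>" "x \<in> X" "d \<in> D" for X x d
  proof -
    have "(\<exists>i\<in>{1..t}. X = A i) \<or> (X \<in> T2 \<or> X \<in> T3)" using cases\<A>[OF that(1)] by blast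
    then show ?thesis
    proof
      assume "\<exists>i\<in>{1..t}. X = A i"
      then obtain i where i: "i \<in> {1..t}" "X = A i" by blast
      have "x \<in> H i" "x \<notin> D" using i that unfolding A_def by auto
      then have "x + d \<in> H i" using sgadd[of "H i" x d] subH i(1) DH[OF i(1)] that(3) by blast
      moreover have "x + d \<notin> D" using sgdiff[OF subD, of "x + d" d] that `x \<notin> D` by auto
      ultimately show ?thesis using i unfolding A_def by blast
    next
      assume "X \<in> T2 \<or> X \<in> T3"
      then obtain g where g: "X = coset g D" using Tcos by blast
      then have "x - g \<in> D" using that(2) mem_coset[of x g D] by simp
      then have "(x - g) + d \<in> D" using sgadd[OF subD _ that(3)] by blast
      then have "(x + d) - g \<in> D" by (metis diff_add_eq)
      then show ?thesis using g mem_coset[of "x + d" g D] by simp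
    qed
  qed
  have W: "\<Union>(\<A> - {X}) = \<Union>\<A> - X" if "X \<in> \<A>" for X
    using disj that unfolding disjoint_def pairwise_def disjnt_def by blast
  have bim: "bimodal \<A>"
    unfolding bimodal_def
  proof (intro conjI disj ballI allI impI)
    fix X \<delta> assume X: "X \<in> \<A>" and "\<delta> \<noteq> (0::'a)"
    let ?W = "\<Union>(\<A> - {X})"
    have "(\<forall>a\<in>X. a - \<delta> \<in> ?W) \<or> (\<forall>a\<in>X. a - \<delta> \<notin> ?W)"
    proof (cases "X \<in> T2 \<union> T3")
      case True
      then obtain g where g: "X = coset g D" using Tcos by blast
      show ?thesis
      proof (cases "\<exists>a\<in>X. a - \<delta> \<in> ?W")
        case True
        then obtain a Y where a: "a \<in> X" "Y \<in> \<A>" "Y \<noteq> X" "a - \<delta> \<in> Y" by blast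
        have "a' - \<delta> \<in> ?W" if a': "a' \<in> X" for a'
        proof -
          have "a' - g \<in> D" "a - g \<in> D" using a(1) a' g mem_coset[of a' g D] mem_coset[of a g D] by simp_all
          then have "(a' - g) - (a - g) \<in> D" using sgdiff[OF subD] by blast
          then have "(a - \<delta>) + (a' - a) \<in> Y" using sat[OF a(2) a(4), of "a' - a"] by simp
          then have "a' - \<delta> \<in> Y" by (simp add: algebra_simps)
          then show ?thesis using a by blast
        qed
        then show ?thesis by blast
      qed blast
    next
      case False
      then obtain i where i: "i \<in> {1..t}" "X = A i" using cases\<A>[OF X] by blast
      show ?thesis
      proof (cases "\<delta> \<in> H i")
        case True
        have "a - \<delta> \<notin> ?W" if a: "a \<in> X" for a
        proof
          assume "a - \<delta> \<in> ?W"
          then have w: "a - \<delta> \<in> \<Union>\<A>" "a - \<delta> \<notin> A i" using W[OF X] i(2) by blast+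
          have "a \<in> H i" using a i(2) unfolding A_def by blast
          then have "a - \<delta> \<in> H i" using sgdiff[of "H i" a \<delta>] subH i(1) True by blast
          then have "a - \<delta> \<notin> \<Union>Cs" using HHs[OF i(1)] CsP by blast
          then have "a - \<delta> \<in> Hs - D" using w U by blast
          then show False using w `a - \<delta> \<in> H i` unfolding A_def by blast
        qed
        then show ?thesis by blast
      next
        case nd: False
        show ?thesis
        proof (cases "\<exists>a\<in>X. a - \<delta> \<in> ?W")
          case True
          then obtain a where a: "a \<in> X" "a - \<delta> \<in> ?W" by blast
          then have "a - \<delta> \<in> Hs \<union> \<Union>Cs" using W[OF X] U by blast
          have "a' - \<delta> \<in> ?W" if a': "a' \<in> X" for a'
          proof -
            have aH: "a \<in> H i" "a' \<in> H i" using a a' i unfolding A_def by auto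
            then have d: "a' - a \<in> Hs" using sgdiff[of "H i" a' a] subH i(1) HHs[OF i(1)] by blast
            have e: "a' - \<delta> = (a - \<delta>) + (a' - a)" by (simp add: algebra_simps)
            have "a' - \<delta> \<in> Hs \<union> \<Union>Cs"
            proof (cases "a - \<delta> \<in> Hs")
              case True then show ?thesis using e sgadd[OF sgHs True d] by simp
            next
              case False
              then obtain K where "K \<in> Cs" "a - \<delta> \<in> K" using `a - \<delta> \<in> Hs \<union> \<Union>Cs` by blast
              then have "(a - \<delta>) + (a' - a) \<in> K" using CsP d by blast
              then show ?thesis using e `K \<in> Cs` by (metis UnionI UnI2)
            qed
            moreover have "a' - \<delta> \<notin> H i"
            proof
              assume "a' - \<delta> \<in> H i"
              then have "a' - (a' - \<delta>) \<in> H i" using sgdiff[of "H i" a' "a' - \<delta>"] subH i(1) aH by blast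
              then show False using nd by simp
            qed
            moreover have "A i \<subseteq> H i" unfolding A_def by blast
            ultimately have "a' - \<delta> \<in> (Hs - D) \<union> \<Union>Cs" "a' - \<delta> \<notin> X" using DH[OF i(1)] i(2) by blast+
            then have "a' - \<delta> \<in> \<Union>\<A> - X" using U by simp
            then show ?thesis using W[OF X] by simp
          qed
          then show ?thesis by blast
        qed blast
      qed
    qed
    then show "N_count \<A> X \<delta> \<in> {0, card X}" by (intro N_count_lemma[OF finite])
  qed
  have idgA: "int_diff_group (A i) = H i" if i: "i \<in> {1..t}" for i
  proof -
    have "{x - y | x y. x \<in> A i \<and> y \<in> A i} = H i"
    proof
      show "{x - y | x y. x \<in> A i \<and> y \<in> A i} \<subseteq> H i"
      proof
        fix z assume "z \<in> {x - y | x y. x \<in> A i \<and> y \<in> A i}"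
        then obtain x y where "z = x - y" "x \<in> H i" "y \<in> H i" unfolding A_def by blast
        then show "z \<in> H i" using sgdiff[of "H i" x y] subH i by blast
      qed
    next
      show "H i \<subseteq> {x - y | x y. x \<in> A i \<and> y \<in> A i}"
      proof
        fix h assume h: "h \<in> H i"
        have cD: "card D \<ge> 1" using sg0[OF subD] card_0_eq[of D] by fastforce
        have "2 < card (H i) div card D" using index i by blast
        then have "3 \<le> card (H i) div card D" by simp
        then have "3 * card D \<le> card (H i) div card D * card D" by simp
        also have "\<dots> \<le> card (H i)" by simp
        finally have c3: "3 * card D \<le> card (H i)" .
        have "card (D \<union> coset (-h) D) \<le> card D + card (coset (-h) D)" by (rule card_Un_le)
        then have "card (D \<union> coset (-h) D) < card (H i)" using c3 cD card_coset[of "-h" D] by linarith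
        then have "\<not> H i \<subseteq> D \<union> coset (-h) D" using card_mono[of "D \<union> coset (-h) D" "H i"] by auto
        then obtain b where b: "b \<in> H i" "b \<notin> D" "b \<notin> coset (-h) D" by blast
        then have bh: "b + h \<notin> D" using mem_coset[of b "-h" D] by simp
        have "b + h \<in> H i" using sgadd[of "H i" b h] subH i b h by blast
        then have "b + h \<in> A i" "b \<in> A i" using b bh unfolding A_def by auto
        moreover have "h = (b + h) - b" by simp
        ultimately show "h \<in> {x - y | x y. x \<in> A i \<and> y \<in> A i}" by blast
      qed
    qed
    then show ?thesis unfolding int_diff_group_def using gc_eq subH i by blast
  qed
  have cardA: "card (A i) < card (int_diff_group (A i))" if i: "i \<in> {1..t}" for i
  proof -
    have "A i \<subset> H i" using sg0[OF subD] sg0 subH i unfolding A_def by blast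
    then show ?thesis using idgA[OF i] by (simp add: psubset_card_mono)
  qed
  have part2: "{S \<in> \<A>. card S < card (int_diff_group S)} = A ` {1..t}"
  proof
    show "{S \<in> \<A>. card S < card (int_diff_group S)} \<subseteq> A ` {1..t}"
    proof
      fix S assume S: "S \<in> {S \<in> \<A>. card S < card (int_diff_group S)}"
      show "S \<in> A ` {1..t}"
      proof (rule ccontr)
        assume "S \<notin> A ` {1..t}"
        then have "S \<in> T2 \<union> T3" using S unfolding \<A>_def by blast
        then obtain g where g: "S = coset g D" using Tcos by blast
        then show False using S idg_coset[OF subD, of g] card_coset[of g D] by simp
      qed
    qed
  next
    show "A ` {1..t} \<subseteq> {S \<in> \<A>. card S < card (int_diff_group S)}"
      using Amem cardA by blast
  qed
  have part3: "\<forall>i\<in>{1..t}. int_diff_group (A i) = H i \<and> H i - A i = D \<and> is_subgroup (H i - A i)"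
  proof
    fix i assume i: "i \<in> {1..t}"
    have "H i - A i = D" using DH[OF i] unfolding A_def by blast
    then show "int_diff_group (A i) = H i \<and> H i - A i = D \<and> is_subgroup (H i - A i)"
      using idgA[OF i] subD by simp
  qed
  show ?thesis
    unfolding Let_def Hs_def[symmetric] A_def[symmetric] T2_def[symmetric] T3_def[symmetric] \<A>_def[symmetric]
    using bim part2 part3 by blast
qed
end
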